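(* Let $G$ be a Garside group with Garside element $\Delta$, let $m$ be the smallest positive integer such that $\Delta^m$ is central in $G$, and let $G_\Delta=G/\langle\Delta^m\rangle$. Then every finite subgroup of $G_\Delta$ is cyclic.
   Context: $G$ is a Garside group: the group of fractions of a Garside monoid $G^+$ (an atomic, left and right cancellative monoid that is a lattice under both the prefix order $\le_L$ and the suffix order $\le_R$, with a Garside element $\Delta$ whose left and right divisors coincide, form a finite set, and generate $G^+$). Some positive power of $\Delta$ is always central in $G$, so $m$ is well defined; $\langle\Delta^m\rangle$ denotes the (normal) cyclic subgroup generated by $\Delta^m$. *)

theory Defs
  imports "HOL-Algebra.Coset" "HOL-Algebra.Generated_Groups"
begin

definition list_prod :: "('a, 'c) monoid_scheme \<Rightarrow> 'a list \<Rightarrow> 'a" where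
  "list_prod M xs = foldr (\<lambda>x y. x \<otimes>\<^bsub>M\<^esub> y) xs \<one>\<^bsub>M\<^esub>"

definition left_div :: "('a, 'c) monoid_scheme \<Rightarrow> 'a \<Rightarrow> 'a \<Rightarrow> bool" where
  "left_div M a b \<longleftrightarrow> (\<exists>c\<in>carrier M. b = a \<otimes>\<^bsub>M\<^esub> c)"

definition right_div :: "('a, 'c) monoid_scheme \<Rightarrow> 'a \<Rightarrow> 'a \<Rightarrow> bool" where
  "right_div M a b \<longleftrightarrow> (\<exists>c\<in>carrier M. b = c \<otimes>\<^bsub>M\<^esub> a)"

definition cancellative :: "('a, 'c) monoid_scheme \<Rightarrow> bool" where
  "cancellative M \<longleftrightarrow>
     (\<forall>a\<in>carrier M. \<forall>b\<in>carrier M. \<forall>c\<in>carrier M.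
        (a \<otimes>\<^bsub>M\<^esub> b = a \<otimes>\<^bsub>M\<^esub> c \<longrightarrow> b = c) \<and>
        (b \<otimes>\<^bsub>M\<^esub> a = c \<otimes>\<^bsub>M\<^esub> a \<longrightarrow> b = c))"

definition atomic_monoid :: "('a, 'c) monoid_scheme \<Rightarrow> bool" where
  "atomic_monoid M \<longleftrightarrow>
     (\<forall>a\<in>carrier M. \<exists>N::nat. \<forall>xs. set xs \<subseteq> carrier M - {\<one>\<^bsub>M\<^esub>} \<and> list_prod M xs = a
        \<longrightarrow> length xs \<le> N)"

definition is_lattice_order :: "'a set \<Rightarrow> ('a \<Rightarrow> 'a \<Rightarrow> bool) \<Rightarrow> bool" where
  "is_lattice_order A R \<longleftrightarrow>
     (\<forall>a\<in>A. \<forall>b\<in>A.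
        (\<exists>j\<in>A. R a j \<and> R b j \<and> (\<forall>z\<in>A. R a z \<and> R b z \<longrightarrow> R j z)) \<and>
        (\<exists>g\<in>A. R g a \<and> R g b \<and> (\<forall>z\<in>A. R z a \<and> R z b \<longrightarrow> R z g)))"

definition garside_element :: "('a, 'c) monoid_scheme \<Rightarrow> 'a \<Rightarrow> bool" where
  "garside_element M \<Delta> \<longleftrightarrow> \<Delta> \<in> carrier M \<and>
     {a\<in>carrier M. left_div M a \<Delta>} = {a\<in>carrier M. right_div M a \<Delta>} \<and>
     finite {a\<in>carrier M. left_div M a \<Delta>} \<and>
     (\<forall>a\<in>carrier M. \<exists>xs. set xs \<subseteq> {d\<in>carrier M. left_div M d \<Delta>} \<and> list_prod M xs = a)"

definition garside_monoid :: "('a, 'c) monoid_scheme \<Rightarrow> 'a \<Rightarrow> bool" where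
  "garside_monoid M \<Delta> \<longleftrightarrow> monoid M \<and> atomic_monoid M \<and> cancellative M \<and>
     is_lattice_order (carrier M) (left_div M) \<and>
     is_lattice_order (carrier M) (right_div M) \<and>
     garside_element M \<Delta>"

definition group_of_fractions ::
  "('a, 'c) monoid_scheme \<Rightarrow> ('b, 'd) monoid_scheme \<Rightarrow> ('a \<Rightarrow> 'b) \<Rightarrow> bool" where
  "group_of_fractions M G \<phi> \<longleftrightarrow> group G \<and> \<phi> \<in> hom M G \<and> inj_on \<phi> (carrier M) \<and>
     (\<forall>g\<in>carrier G. \<exists>a\<in>carrier M. \<exists>b\<in>carrier M. g = inv\<^bsub>G\<^esub> (\<phi> a) \<otimes>\<^bsub>G\<^esub> \<phi> b)"

definition central_elem :: "('b, 'd) monoid_scheme \<Rightarrow> 'b \<Rightarrow> bool" where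
  "central_elem G z \<longleftrightarrow> z \<in> carrier G \<and> (\<forall>g\<in>carrier G. g \<otimes>\<^bsub>G\<^esub> z = z \<otimes>\<^bsub>G\<^esub> g)"

definition cyclic_subgroup :: "('b, 'd) monoid_scheme \<Rightarrow> 'b set \<Rightarrow> bool" where
  "cyclic_subgroup G K \<longleftrightarrow> (\<exists>x\<in>K. K = generate G {x})"

end

theory Submission
  imports Defs "HOL-Algebra.Multiplicative_Group"
begin

locale gars =
  fixes M :: "('a, 'c) monoid_scheme" and G :: "('b, 'd) monoid_scheme"
    and phi :: "'a \<Rightarrow> 'b" and D :: 'a
  assumes gm: "garside_monoid M D" and gf: "group_of_fractions M G phi"
begin

lemma monM: "monoid M" using gm by (simp add: garside_monoid_def)
lemma grpG: "group G" using gf by (simp add: group_of_fractions_def)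

sublocale M: monoid M by (rule monM)
sublocale G: group G by (rule grpG)

lemma phi_hom: "phi \<in> hom M G" using gf by (simp add: group_of_fractions_def)
lemma phi_inj: "inj_on phi (carrier M)" using gf by (simp add: group_of_fractions_def)
lemma phi_surj: "g \<in> carrier G \<Longrightarrow> \<exists>a\<in>carrier M. \<exists>b\<in>carrier M. g = inv\<^bsub>G\<^esub> (phi a) \<otimes>\<^bsub>G\<^esub> phi b"
  using gf by (simp add: group_of_fractions_def)
lemma canc: "cancellative M" using gm by (simp add: garside_monoid_def)
lemma atom: "atomic_monoid M" using gm by (simp add: garside_monoid_def)
lemma latL: "is_lattice_order (carrier M) (left_div M)" using gm by (simp add: garside_monoid_def)
lemma gel: "garside_element M D" using gm by (simp add: garside_monoid_def)

lemma D_carrier: "D \<in> carrier M" using gel by (simp add: garside_element_def)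

abbreviation "S \<equiv> {a\<in>carrier M. left_div M a D}"

lemma S_eq: "S = {a\<in>carrier M. right_div M a D}" using gel by (simp add: garside_element_def)
lemma S_fin: "finite S" using gel unfolding garside_element_def by blast
lemma S_gen: "a \<in> carrier M \<Longrightarrow> \<exists>xs. set xs \<subseteq> S \<and> list_prod M xs = a"
  using gel unfolding garside_element_def by blast

lemma phi_carrier: "a \<in> carrier M \<Longrightarrow> phi a \<in> carrier G" using phi_hom by (rule hom_in_carrier)
lemma phi_mult: "a \<in> carrier M \<Longrightarrow> b \<in> carrier M \<Longrightarrow> phi (a \<otimes>\<^bsub>M\<^esub> b) = phi a \<otimes>\<^bsub>G\<^esub> phi b"
  using phi_hom by (rule hom_mult)
lemma Glc: assumes a: "a \<in> carrier G" and b: "b \<in> carrier G" and c: "c \<in> carrier G"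
  and e: "a \<otimes>\<^bsub>G\<^esub> b = a \<otimes>\<^bsub>G\<^esub> c" shows "b = c"
proof -
  have "b = inv\<^bsub>G\<^esub> a \<otimes>\<^bsub>G\<^esub> (a \<otimes>\<^bsub>G\<^esub> b)" using a b by (simp add: G.m_assoc[symmetric])
  also have "\<dots> = inv\<^bsub>G\<^esub> a \<otimes>\<^bsub>G\<^esub> (a \<otimes>\<^bsub>G\<^esub> c)" using e by simp
  also have "\<dots> = c" using a c by (simp add: G.m_assoc[symmetric])
  finally show ?thesis .
qed

lemma phi_one: "phi \<one>\<^bsub>M\<^esub> = \<one>\<^bsub>G\<^esub>"
proof -
  have "phi \<one>\<^bsub>M\<^esub> \<otimes>\<^bsub>G\<^esub> phi \<one>\<^bsub>M\<^esub> = phi \<one>\<^bsub>M\<^esub> \<otimes>\<^bsub>G\<^esub> \<one>\<^bsub>G\<^esub>"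
    using phi_mult[of "\<one>\<^bsub>M\<^esub>" "\<one>\<^bsub>M\<^esub>"] phi_carrier[of "\<one>\<^bsub>M\<^esub>"] by simp
  then show ?thesis using Glc[of "phi \<one>\<^bsub>M\<^esub>" "phi \<one>\<^bsub>M\<^esub>" "\<one>\<^bsub>G\<^esub>"] phi_carrier[of "\<one>\<^bsub>M\<^esub>"] by simp
qed
lemma phi_pow: "phi (D [^]\<^bsub>M\<^esub> (n::nat)) = phi D [^]\<^bsub>G\<^esub> n"
proof (induction n)
  case 0 show ?case using phi_one by simp
next
  case (Suc n)
  have "phi (D [^]\<^bsub>M\<^esub> Suc n) = phi (D [^]\<^bsub>M\<^esub> n \<otimes>\<^bsub>M\<^esub> D)" by simp
  also have "\<dots> = phi (D [^]\<^bsub>M\<^esub> n) \<otimes>\<^bsub>G\<^esub> phi D" by (rule phi_mult) (use D_carrier in simp_all)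
  also have "\<dots> = phi D [^]\<^bsub>G\<^esub> Suc n" using Suc by simp
  finally show ?case .
qed

lemma lcancel: "a \<in> carrier M \<Longrightarrow> b \<in> carrier M \<Longrightarrow> c \<in> carrier M \<Longrightarrow> a \<otimes>\<^bsub>M\<^esub> b = a \<otimes>\<^bsub>M\<^esub> c \<Longrightarrow> b = c"
  using canc unfolding cancellative_def by blast

lemma lp_Cons: "list_prod M (x # xs) = x \<otimes>\<^bsub>M\<^esub> list_prod M xs" by (simp add: list_prod_def)
lemma lp_Nil: "list_prod M [] = \<one>\<^bsub>M\<^esub>" by (simp add: list_prod_def)
lemma lp_closed: "set xs \<subseteq> carrier M \<Longrightarrow> list_prod M xs \<in> carrier M"
  by (induction xs) (auto simp: lp_Cons lp_Nil)

lemma no_units: assumes a: "a \<in> carrier M" and b: "b \<in> carrier M" and e: "a \<otimes>\<^bsub>M\<^esub> b = \<one>\<^bsub>M\<^esub>"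
  shows "a = \<one>\<^bsub>M\<^esub>"
proof (rule ccontr)
  assume an: "a \<noteq> \<one>\<^bsub>M\<^esub>"
  have bn: "b \<noteq> \<one>\<^bsub>M\<^esub>" using an e a by auto
  have "\<exists>N. \<forall>xs. set xs \<subseteq> carrier M - {\<one>\<^bsub>M\<^esub>} \<and> list_prod M xs = \<one>\<^bsub>M\<^esub> \<longrightarrow> length xs \<le> N"
    using atom M.one_closed unfolding atomic_monoid_def by blast
  then obtain N where N: "\<And>xs. set xs \<subseteq> carrier M - {\<one>\<^bsub>M\<^esub>} \<and> list_prod M xs = \<one>\<^bsub>M\<^esub> \<Longrightarrow> length xs \<le> N"
    by blast
  define xs where "xs = concat (replicate (Suc N) [a, b])"
  have h0: "set xs \<subseteq> carrier M - {\<one>\<^bsub>M\<^esub>}" unfolding xs_def using a b an bn by auto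
  have "list_prod M (concat (replicate n [a, b])) = \<one>\<^bsub>M\<^esub>" for n
    by (induction n) (auto simp: lp_Cons lp_Nil M.m_assoc[symmetric] a b e)
  then have h1: "list_prod M xs = \<one>\<^bsub>M\<^esub>" unfolding xs_def by blast
  have h2: "length xs = 2 * Suc N" unfolding xs_def by (simp add: length_concat sum_list_replicate)
  have "length xs \<le> N" using N h0 h1 by blast
  then show False using h2 by simp
qed

lemma S_D_right: "s \<in> S \<Longrightarrow> \<exists>t\<in>S. D = t \<otimes>\<^bsub>M\<^esub> s"
proof -
  assume s: "s \<in> S"
  then have "right_div M s D" using S_eq by blast
  then obtain u where u: "u \<in> carrier M" "D = u \<otimes>\<^bsub>M\<^esub> s" by (auto simp: right_div_def)
  then have "left_div M u D" using s by (auto simp: left_div_def)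
  then show ?thesis using u by blast
qed

lemma S_conj: assumes s: "s \<in> S" shows "\<exists>w\<in>S. D \<otimes>\<^bsub>M\<^esub> s = w \<otimes>\<^bsub>M\<^esub> D"
proof -
  obtain u where u: "u \<in> S" "D = u \<otimes>\<^bsub>M\<^esub> s" using S_D_right[OF s] by blast
  then have "right_div M u D" using S_eq by blast
  then obtain w where w: "w \<in> carrier M" "D = w \<otimes>\<^bsub>M\<^esub> u" by (auto simp: right_div_def)
  have "left_div M w D" using w u by (auto simp: left_div_def)
  then have wS: "w \<in> S" using w by blast
  have "D \<otimes>\<^bsub>M\<^esub> s = w \<otimes>\<^bsub>M\<^esub> D"
  proof -
    have sc: "s \<in> carrier M" using s by simp
    have uc: "u \<in> carrier M" using u by simp
    have "D \<otimes>\<^bsub>M\<^esub> s = (w \<otimes>\<^bsub>M\<^esub> u) \<otimes>\<^bsub>M\<^esub> s" using w(2) by simp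
    also have "\<dots> = w \<otimes>\<^bsub>M\<^esub> (u \<otimes>\<^bsub>M\<^esub> s)" by (rule M.m_assoc[OF w(1) uc sc])
    also have "\<dots> = w \<otimes>\<^bsub>M\<^esub> D" using u(2) by simp
    finally show ?thesis .
  qed
  then show ?thesis using wS by blast
qed

lemma D_conj_all: assumes a: "a \<in> carrier M" shows "\<exists>a'\<in>carrier M. D \<otimes>\<^bsub>M\<^esub> a = a' \<otimes>\<^bsub>M\<^esub> D"
proof -
  obtain xs where xs: "set xs \<subseteq> S" "list_prod M xs = a" using S_gen[OF a] by blast
  have "set xs \<subseteq> S \<Longrightarrow> \<exists>a'\<in>carrier M. D \<otimes>\<^bsub>M\<^esub> list_prod M xs = a' \<otimes>\<^bsub>M\<^esub> D"
  proof (induction xs)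
    case Nil then show ?case using D_carrier by (auto simp: lp_Nil intro!: bexI[of _ "\<one>\<^bsub>M\<^esub>"])
  next
    case (Cons s xs)
    then obtain r' where r': "r' \<in> carrier M" "D \<otimes>\<^bsub>M\<^esub> list_prod M xs = r' \<otimes>\<^bsub>M\<^esub> D" by auto
    have s: "s \<in> S" using Cons by auto
    obtain w where w: "w \<in> S" "D \<otimes>\<^bsub>M\<^esub> s = w \<otimes>\<^bsub>M\<^esub> D" using S_conj[OF s] by blast
    have r: "list_prod M xs \<in> carrier M" using Cons lp_closed by auto
    have "D \<otimes>\<^bsub>M\<^esub> list_prod M (s # xs) = (D \<otimes>\<^bsub>M\<^esub> s) \<otimes>\<^bsub>M\<^esub> list_prod M xs"
      using s r D_carrier by (simp add: lp_Cons M.m_assoc)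
    also have "\<dots> = w \<otimes>\<^bsub>M\<^esub> (D \<otimes>\<^bsub>M\<^esub> list_prod M xs)" using w r D_carrier by (simp add: M.m_assoc)
    also have "\<dots> = (w \<otimes>\<^bsub>M\<^esub> r') \<otimes>\<^bsub>M\<^esub> D" using r' w D_carrier by (simp add: M.m_assoc)
    finally show ?case using w r' by auto
  qed
  then show ?thesis using xs by simp
qed

lemma right_div_pow: assumes a: "a \<in> carrier M" shows "\<exists>k. \<exists>y\<in>carrier M. D [^]\<^bsub>M\<^esub> (k::nat) = y \<otimes>\<^bsub>M\<^esub> a"
proof -
  obtain xs where xs: "set xs \<subseteq> S" "list_prod M xs = a" using S_gen[OF a] by blast
  have "set xs \<subseteq> S \<Longrightarrow> \<exists>k. \<exists>y\<in>carrier M. D [^]\<^bsub>M\<^esub> (k::nat) = y \<otimes>\<^bsub>M\<^esub> list_prod M xs"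
  proof (induction xs)
    case Nil then show ?case by (auto simp: lp_Nil intro!: exI[of _ 0])
  next
    case (Cons s xs)
    then obtain k y where y: "y \<in> carrier M" "D [^]\<^bsub>M\<^esub> (k::nat) = y \<otimes>\<^bsub>M\<^esub> list_prod M xs" by auto
    have s: "s \<in> S" using Cons by auto
    have r: "list_prod M xs \<in> carrier M" using Cons lp_closed by auto
    obtain t where t: "t \<in> S" "D = t \<otimes>\<^bsub>M\<^esub> s" using S_D_right[OF s] by blast
    obtain y' where y': "y' \<in> carrier M" "D \<otimes>\<^bsub>M\<^esub> y = y' \<otimes>\<^bsub>M\<^esub> D" using D_conj_all[OF y(1)] by blast
    have "D [^]\<^bsub>M\<^esub> Suc k = D \<otimes>\<^bsub>M\<^esub> D [^]\<^bsub>M\<^esub> k" by (rule M.nat_pow_Suc2[OF D_carrier])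
    also have "\<dots> = D \<otimes>\<^bsub>M\<^esub> (y \<otimes>\<^bsub>M\<^esub> list_prod M xs)" using y(2) by simp
    also have "\<dots> = (y' \<otimes>\<^bsub>M\<^esub> D) \<otimes>\<^bsub>M\<^esub> list_prod M xs" using y y' r D_carrier by (simp add: M.m_assoc[symmetric])
    also have "\<dots> = (y' \<otimes>\<^bsub>M\<^esub> t) \<otimes>\<^bsub>M\<^esub> list_prod M (s # xs)" using t y' r s by (simp add: M.m_assoc lp_Cons)
    finally show ?case using y' t by blast
  qed
  then show ?thesis using xs by simp
qed


definition tau :: "'a \<Rightarrow> 'a" where "tau s = (SOME w. w \<in> S \<and> D \<otimes>\<^bsub>M\<^esub> s = w \<otimes>\<^bsub>M\<^esub> D)"

lemma tau_spec: assumes "s \<in> S" shows "tau s \<in> S" "D \<otimes>\<^bsub>M\<^esub> s = tau s \<otimes>\<^bsub>M\<^esub> D"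
proof -
  have "tau s \<in> S \<and> D \<otimes>\<^bsub>M\<^esub> s = tau s \<otimes>\<^bsub>M\<^esub> D"
  proof -
    have "\<exists>w. w \<in> S \<and> D \<otimes>\<^bsub>M\<^esub> s = w \<otimes>\<^bsub>M\<^esub> D" using S_conj[OF assms] by blast
    then show ?thesis unfolding tau_def by (rule someI_ex)
  qed
  then show "tau s \<in> S" "D \<otimes>\<^bsub>M\<^esub> s = tau s \<otimes>\<^bsub>M\<^esub> D" by auto
qed

lemma tau_bij: "bij_betw tau S S"
proof -
  have inj: "inj_on tau S"
  proof (rule inj_onI)
    fix s s' assume s: "s \<in> S" and s': "s' \<in> S" and e: "tau s = tau s'"
    have "D \<otimes>\<^bsub>M\<^esub> s = D \<otimes>\<^bsub>M\<^esub> s'" using tau_spec[OF s] tau_spec[OF s'] e by simp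
    then show "s = s'" using lcancel D_carrier s s' by blast
  qed
  have "tau ` S \<subseteq> S" using tau_spec by blast
  then have "tau ` S = S" using endo_inj_surj[OF S_fin _ inj] by blast
  then show ?thesis using inj by (simp add: bij_betw_def)
qed

lemma pow_conj: "s \<in> S \<Longrightarrow> D [^]\<^bsub>M\<^esub> (n::nat) \<otimes>\<^bsub>M\<^esub> s = (tau ^^ n) s \<otimes>\<^bsub>M\<^esub> D [^]\<^bsub>M\<^esub> n"
proof (induction n arbitrary: s)
  case 0 then show ?case by simp
next
  case (Suc n)
  have t: "tau s \<in> S" "D \<otimes>\<^bsub>M\<^esub> s = tau s \<otimes>\<^bsub>M\<^esub> D" using tau_spec[OF Suc.prems] by auto
  have sc: "s \<in> carrier M" using Suc.prems by simp
  have "(tau ^^ n) (tau s) \<in> S" using bij_betwE[OF bij_betw_funpow[OF tau_bij, of n]] t(1) by blast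
  then have tn: "(tau ^^ n) (tau s) \<in> carrier M" by simp
  have "D [^]\<^bsub>M\<^esub> Suc n \<otimes>\<^bsub>M\<^esub> s = D [^]\<^bsub>M\<^esub> n \<otimes>\<^bsub>M\<^esub> (D \<otimes>\<^bsub>M\<^esub> s)"
    using D_carrier sc by (simp add: M.m_assoc)
  also have "\<dots> = (D [^]\<^bsub>M\<^esub> n \<otimes>\<^bsub>M\<^esub> tau s) \<otimes>\<^bsub>M\<^esub> D" using t D_carrier by (simp add: M.m_assoc)
  also have "\<dots> = (tau ^^ n) (tau s) \<otimes>\<^bsub>M\<^esub> D [^]\<^bsub>M\<^esub> Suc n"
    using Suc.IH[OF t(1)] tn D_carrier by (simp add: M.m_assoc)
  finally show ?case by (simp add: funpow_Suc_right del: funpow.simps)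
qed

lemma tau_periodic: "\<exists>k>0. \<forall>s\<in>S. (tau ^^ k) s = s"
proof -
  define F where "F = (\<lambda>i. restrict (tau ^^ i) S)"
  have fS: "(tau ^^ i) s \<in> S" if "s \<in> S" for i s
    using bij_betwE[OF bij_betw_funpow[OF tau_bij, of i]] that by blast
  have "F i \<in> (\<Pi>\<^sub>E s\<in>S. S)" for i unfolding F_def restrict_PiE_iff using fS by blast
  then have "range F \<subseteq> (\<Pi>\<^sub>E s\<in>S. S)" by blast
  moreover have "finite (\<Pi>\<^sub>E s\<in>S. S)" using S_fin by (intro finite_PiE) auto
  ultimately have "finite (range F)" using finite_subset by blast
  then have "\<not> inj F" using finite_imageD[of F UNIV] by auto
  then obtain i j where ij: "i \<noteq> j" "F i = F j" unfolding inj_def by blast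
  obtain a b where ab: "a < b" "F a = F b" using ij by (metis linorder_neq_iff)
  have "\<forall>s\<in>S. (tau ^^ (b - a)) s = s"
  proof
    fix s assume s: "s \<in> S"
    have r: "(tau ^^ (b - a)) s \<in> S" using fS s by blast
    have ba: "a + (b - a) = b" using ab(1) by simp
    have "(tau ^^ (a + (b - a))) s = (tau ^^ a) ((tau ^^ (b - a)) s)" by (simp add: funpow_add)
    then have e1: "(tau ^^ a) ((tau ^^ (b - a)) s) = (tau ^^ b) s" unfolding ba by simp
    have "F b s = F a s" using ab(2) by simp
    then have e2: "(tau ^^ b) s = (tau ^^ a) s" using s unfolding F_def by simp
    have inj: "inj_on (tau ^^ a) S" using bij_betw_funpow[OF tau_bij, of a] by (rule bij_betw_imp_inj_on)
    show "(tau ^^ (b - a)) s = s" using inj_onD[OF inj _ r s] e1 e2 by simp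
  qed
  then show ?thesis using ab(1) by (intro exI[of _ "b - a"]) auto
qed

lemma central_pow_M: "\<exists>k>0. \<forall>a\<in>carrier M. D [^]\<^bsub>M\<^esub> (k::nat) \<otimes>\<^bsub>M\<^esub> a = a \<otimes>\<^bsub>M\<^esub> D [^]\<^bsub>M\<^esub> k"
proof -
  obtain k where k: "k > 0" "\<forall>s\<in>S. (tau ^^ k) s = s" using tau_periodic by blast
  have Ds: "D [^]\<^bsub>M\<^esub> k \<otimes>\<^bsub>M\<^esub> s = s \<otimes>\<^bsub>M\<^esub> D [^]\<^bsub>M\<^esub> k" if "s \<in> S" for s
    using pow_conj[OF that, of k] k(2) that by simp
  have "set xs \<subseteq> S \<Longrightarrow> D [^]\<^bsub>M\<^esub> k \<otimes>\<^bsub>M\<^esub> list_prod M xs = list_prod M xs \<otimes>\<^bsub>M\<^esub> D [^]\<^bsub>M\<^esub> k" for xs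
  proof (induction xs)
    case Nil then show ?case using D_carrier by (simp add: lp_Nil)
  next
    case (Cons s xs)
    have s: "s \<in> S" using Cons by simp
    have r: "list_prod M xs \<in> carrier M" using Cons lp_closed by auto
    have "D [^]\<^bsub>M\<^esub> k \<otimes>\<^bsub>M\<^esub> list_prod M (s # xs) = (D [^]\<^bsub>M\<^esub> k \<otimes>\<^bsub>M\<^esub> s) \<otimes>\<^bsub>M\<^esub> list_prod M xs"
      using s r D_carrier by (simp add: lp_Cons M.m_assoc)
    also have "\<dots> = s \<otimes>\<^bsub>M\<^esub> (D [^]\<^bsub>M\<^esub> k \<otimes>\<^bsub>M\<^esub> list_prod M xs)" using Ds[OF s] s r D_carrier by (simp add: M.m_assoc)
    also have "\<dots> = list_prod M (s # xs) \<otimes>\<^bsub>M\<^esub> D [^]\<^bsub>M\<^esub> k" using Cons s r D_carrier by (simp add: lp_Cons M.m_assoc)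
    finally show ?case .
  qed
  then show ?thesis
  proof (intro exI[of _ k] conjI ballI k(1))
    fix a assume a: "a \<in> carrier M"
    obtain xs where xs: "set xs \<subseteq> S" "list_prod M xs = a" using S_gen[OF a] by blast
    assume h: "\<And>xs. set xs \<subseteq> S \<Longrightarrow> D [^]\<^bsub>M\<^esub> k \<otimes>\<^bsub>M\<^esub> list_prod M xs = list_prod M xs \<otimes>\<^bsub>M\<^esub> D [^]\<^bsub>M\<^esub> k"
    show "D [^]\<^bsub>M\<^esub> k \<otimes>\<^bsub>M\<^esub> a = a \<otimes>\<^bsub>M\<^esub> D [^]\<^bsub>M\<^esub> k" using h[OF xs(1)] xs(2) by simp
  qed
qed

abbreviation "d \<equiv> phi D"

lemma d_carrier: "d \<in> carrier G" using phi_carrier D_carrier by simp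

lemma central_pow_G: "\<exists>k>0. central_elem G (d [^]\<^bsub>G\<^esub> (k::nat))"
proof -
  obtain k where k: "k > 0" "\<forall>a\<in>carrier M. D [^]\<^bsub>M\<^esub> (k::nat) \<otimes>\<^bsub>M\<^esub> a = a \<otimes>\<^bsub>M\<^esub> D [^]\<^bsub>M\<^esub> k"
    using central_pow_M by blast
  let ?c = "d [^]\<^bsub>G\<^esub> k"
  have c: "?c \<in> carrier G" using d_carrier by simp
  have ca: "phi a \<otimes>\<^bsub>G\<^esub> ?c = ?c \<otimes>\<^bsub>G\<^esub> phi a" if a: "a \<in> carrier M" for a
    using k(2) a phi_mult[of a "D [^]\<^bsub>M\<^esub> k"] phi_mult[of "D [^]\<^bsub>M\<^esub> k" a] D_carrier phi_pow by simp
  have cia: "inv\<^bsub>G\<^esub> (phi a) \<otimes>\<^bsub>G\<^esub> ?c = ?c \<otimes>\<^bsub>G\<^esub> inv\<^bsub>G\<^esub> (phi a)" if a: "a \<in> carrier M" for a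
  proof -
    have pa: "phi a \<in> carrier G" using phi_carrier a by simp
    have "inv\<^bsub>G\<^esub> (phi a) \<otimes>\<^bsub>G\<^esub> ?c = inv\<^bsub>G\<^esub> (phi a) \<otimes>\<^bsub>G\<^esub> (?c \<otimes>\<^bsub>G\<^esub> phi a) \<otimes>\<^bsub>G\<^esub> inv\<^bsub>G\<^esub> (phi a)"
      using pa c by (simp add: G.m_assoc)
    also have "\<dots> = inv\<^bsub>G\<^esub> (phi a) \<otimes>\<^bsub>G\<^esub> (phi a \<otimes>\<^bsub>G\<^esub> ?c) \<otimes>\<^bsub>G\<^esub> inv\<^bsub>G\<^esub> (phi a)" using ca[OF a] by simp
    also have "\<dots> = ?c \<otimes>\<^bsub>G\<^esub> inv\<^bsub>G\<^esub> (phi a)" using pa c by (simp add: G.m_assoc[symmetric])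
    finally show ?thesis .
  qed
  have "\<forall>g\<in>carrier G. g \<otimes>\<^bsub>G\<^esub> ?c = ?c \<otimes>\<^bsub>G\<^esub> g"
  proof
    fix g assume g: "g \<in> carrier G"
    obtain a b where ab: "a \<in> carrier M" "b \<in> carrier M" "g = inv\<^bsub>G\<^esub> (phi a) \<otimes>\<^bsub>G\<^esub> phi b" using phi_surj[OF g] by blast
    have pa: "phi a \<in> carrier G" "phi b \<in> carrier G" using phi_carrier ab by auto
    have "g \<otimes>\<^bsub>G\<^esub> ?c = inv\<^bsub>G\<^esub> (phi a) \<otimes>\<^bsub>G\<^esub> (phi b \<otimes>\<^bsub>G\<^esub> ?c)" using ab pa c by (simp add: G.m_assoc)
    also have "\<dots> = (inv\<^bsub>G\<^esub> (phi a) \<otimes>\<^bsub>G\<^esub> ?c) \<otimes>\<^bsub>G\<^esub> phi b" using ca[OF ab(2)] pa c by (simp add: G.m_assoc)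
    also have "\<dots> = ?c \<otimes>\<^bsub>G\<^esub> g" using cia[OF ab(1)] ab pa c by (simp add: G.m_assoc)
    finally show "g \<otimes>\<^bsub>G\<^esub> ?c = ?c \<otimes>\<^bsub>G\<^esub> g" .
  qed
  then show ?thesis using k(1) c by (auto simp: central_elem_def)
qed


definition le :: "'b \<Rightarrow> 'b \<Rightarrow> bool" where "le g h \<longleftrightarrow> (\<exists>r\<in>carrier M. h = g \<otimes>\<^bsub>G\<^esub> phi r)"

lemma le_refl: "g \<in> carrier G \<Longrightarrow> le g g"
  unfolding le_def using phi_one by (intro bexI[of _ "\<one>\<^bsub>M\<^esub>"]) auto

lemma le_trans: assumes g: "g \<in> carrier G" and "le g h" "le h k" shows "le g k"
proof -
  obtain r where r: "r \<in> carrier M" "h = g \<otimes>\<^bsub>G\<^esub> phi r" using assms(2) by (auto simp: le_def)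
  obtain r' where r': "r' \<in> carrier M" "k = h \<otimes>\<^bsub>G\<^esub> phi r'" using assms(3) by (auto simp: le_def)
  have "k = g \<otimes>\<^bsub>G\<^esub> phi (r \<otimes>\<^bsub>M\<^esub> r')" using r r' g phi_mult phi_carrier by (simp add: G.m_assoc)
  then show ?thesis using r r' unfolding le_def by blast
qed

lemma le_antisym: assumes g: "g \<in> carrier G" and "le g h" "le h g" shows "g = h"
proof -
  obtain r where r: "r \<in> carrier M" "h = g \<otimes>\<^bsub>G\<^esub> phi r" using assms(2) by (auto simp: le_def)
  obtain r' where r': "r' \<in> carrier M" "g = h \<otimes>\<^bsub>G\<^esub> phi r'" using assms(3) by (auto simp: le_def)
  have "g = (g \<otimes>\<^bsub>G\<^esub> phi r) \<otimes>\<^bsub>G\<^esub> phi r'" using r'(2) unfolding r(2) .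
  also have "\<dots> = g \<otimes>\<^bsub>G\<^esub> phi (r \<otimes>\<^bsub>M\<^esub> r')"
    using r(1) r'(1) g phi_carrier by (simp add: G.m_assoc phi_mult)
  finally have "g = g \<otimes>\<^bsub>G\<^esub> phi (r \<otimes>\<^bsub>M\<^esub> r')" .
  then have "phi (r \<otimes>\<^bsub>M\<^esub> r') = \<one>\<^bsub>G\<^esub>"
    using G.l_cancel_one'[OF g phi_carrier[OF M.m_closed[OF r(1) r'(1)]]] by blast
  then have "phi (r \<otimes>\<^bsub>M\<^esub> r') = phi \<one>\<^bsub>M\<^esub>" using phi_one by simp
  then have "r \<otimes>\<^bsub>M\<^esub> r' = \<one>\<^bsub>M\<^esub>" by (rule inj_onD[OF phi_inj]) (use r r' in auto)
  then have "r = \<one>\<^bsub>M\<^esub>" using no_units r r' by blast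
  then show ?thesis using r g phi_one by simp
qed

lemma le_mult: assumes "x \<in> carrier G" "g \<in> carrier G" "le g h" shows "le (x \<otimes>\<^bsub>G\<^esub> g) (x \<otimes>\<^bsub>G\<^esub> h)"
  using assms unfolding le_def by (auto simp: G.m_assoc phi_carrier)

lemma le_mult_rev: assumes x: "x \<in> carrier G" and g: "g \<in> carrier G" and h: "h \<in> carrier G"
  and "le (x \<otimes>\<^bsub>G\<^esub> g) (x \<otimes>\<^bsub>G\<^esub> h)" shows "le g h"
proof -
  have "le (inv\<^bsub>G\<^esub> x \<otimes>\<^bsub>G\<^esub> (x \<otimes>\<^bsub>G\<^esub> g)) (inv\<^bsub>G\<^esub> x \<otimes>\<^bsub>G\<^esub> (x \<otimes>\<^bsub>G\<^esub> h))"
    using le_mult assms by simp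
  then show ?thesis using x g h by (simp add: G.m_assoc[symmetric])
qed

lemma lower: assumes g: "g \<in> carrier G"
  shows "\<exists>k. \<forall>K\<ge>k. \<exists>p\<in>carrier M. g = inv\<^bsub>G\<^esub> (d [^]\<^bsub>G\<^esub> (K::nat)) \<otimes>\<^bsub>G\<^esub> phi p"
proof -
  obtain a b where ab: "a \<in> carrier M" "b \<in> carrier M" "g = inv\<^bsub>G\<^esub> (phi a) \<otimes>\<^bsub>G\<^esub> phi b" using phi_surj[OF g] by blast
  obtain k y where y: "y \<in> carrier M" "D [^]\<^bsub>M\<^esub> (k::nat) = y \<otimes>\<^bsub>M\<^esub> a" using right_div_pow[OF ab(1)] by blast
  have "\<exists>p\<in>carrier M. g = inv\<^bsub>G\<^esub> (d [^]\<^bsub>G\<^esub> K) \<otimes>\<^bsub>G\<^esub> phi p" if K: "K \<ge> k" for K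
  proof -
    define Y where "Y = D [^]\<^bsub>M\<^esub> (K - k) \<otimes>\<^bsub>M\<^esub> y"
    have Yc: "Y \<in> carrier M" using Y_def y D_carrier by simp
    have "D [^]\<^bsub>M\<^esub> K = D [^]\<^bsub>M\<^esub> (K - k) \<otimes>\<^bsub>M\<^esub> D [^]\<^bsub>M\<^esub> k" using K D_carrier by (simp add: M.nat_pow_mult)
    also have "\<dots> = Y \<otimes>\<^bsub>M\<^esub> a" using y Y_def D_carrier ab by (simp add: M.m_assoc)
    finally have DK: "D [^]\<^bsub>M\<^esub> K = Y \<otimes>\<^bsub>M\<^esub> a" .
    have "d [^]\<^bsub>G\<^esub> K = phi (D [^]\<^bsub>M\<^esub> K)" by (rule phi_pow[symmetric])
    also have "\<dots> = phi (Y \<otimes>\<^bsub>M\<^esub> a)" using DK by simp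
    also have "\<dots> = phi Y \<otimes>\<^bsub>G\<^esub> phi a" by (rule phi_mult[OF Yc ab(1)])
    finally have "d [^]\<^bsub>G\<^esub> K = phi Y \<otimes>\<^bsub>G\<^esub> phi a" .
    then have "inv\<^bsub>G\<^esub> (d [^]\<^bsub>G\<^esub> K) \<otimes>\<^bsub>G\<^esub> phi (Y \<otimes>\<^bsub>M\<^esub> b) = inv\<^bsub>G\<^esub> (phi a) \<otimes>\<^bsub>G\<^esub> inv\<^bsub>G\<^esub> (phi Y) \<otimes>\<^bsub>G\<^esub> (phi Y \<otimes>\<^bsub>G\<^esub> phi b)"
      using Yc ab phi_carrier phi_mult by (simp add: G.inv_mult_group)
    also have "\<dots> = inv\<^bsub>G\<^esub> (phi a) \<otimes>\<^bsub>G\<^esub> (inv\<^bsub>G\<^esub> (phi Y) \<otimes>\<^bsub>G\<^esub> (phi Y \<otimes>\<^bsub>G\<^esub> phi b))"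
      using Yc ab phi_carrier by (simp add: G.m_assoc)
    also have "inv\<^bsub>G\<^esub> (phi Y) \<otimes>\<^bsub>G\<^esub> (phi Y \<otimes>\<^bsub>G\<^esub> phi b) = phi b"
      using Yc ab phi_carrier by (simp add: G.m_assoc[symmetric])
    also have "inv\<^bsub>G\<^esub> (phi a) \<otimes>\<^bsub>G\<^esub> phi b = g" using ab(3) by simp
    finally show ?thesis using Yc ab by (intro bexI[of _ "Y \<otimes>\<^bsub>M\<^esub> b"]) auto
  qed
  then show ?thesis by blast
qed

lemma join: assumes g: "g \<in> carrier G" and h: "h \<in> carrier G"
  shows "\<exists>j\<in>carrier G. le g j \<and> le h j \<and> (\<forall>v\<in>carrier G. le g v \<longrightarrow> le h v \<longrightarrow> le j v)"
proof -
  obtain k1 where k1: "\<forall>K\<ge>k1. \<exists>p\<in>carrier M. g = inv\<^bsub>G\<^esub> (d [^]\<^bsub>G\<^esub> (K::nat)) \<otimes>\<^bsub>G\<^esub> phi p" using lower[OF g] by blast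
  obtain k2 where k2: "\<forall>K\<ge>k2. \<exists>p\<in>carrier M. h = inv\<^bsub>G\<^esub> (d [^]\<^bsub>G\<^esub> (K::nat)) \<otimes>\<^bsub>G\<^esub> phi p" using lower[OF h] by blast
  define c where "c = inv\<^bsub>G\<^esub> (d [^]\<^bsub>G\<^esub> (max k1 k2))"
  have c: "c \<in> carrier G" using c_def d_carrier by simp
  obtain p where p: "p \<in> carrier M" "g = c \<otimes>\<^bsub>G\<^esub> phi p" using k1 max.cobounded1 unfolding c_def by blast
  obtain q where q: "q \<in> carrier M" "h = c \<otimes>\<^bsub>G\<^esub> phi q" using k2 max.cobounded2 unfolding c_def by blast
  obtain l where l: "l \<in> carrier M" "left_div M p l" "left_div M q l"
    "\<forall>z\<in>carrier M. left_div M p z \<and> left_div M q z \<longrightarrow> left_div M l z"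
    using latL p q unfolding is_lattice_order_def by blast
  define j where "j = c \<otimes>\<^bsub>G\<^esub> phi l"
  have jc: "j \<in> carrier G" using j_def c l phi_carrier by simp
  have lej: "le (c \<otimes>\<^bsub>G\<^esub> phi x) j" if xm: "x \<in> carrier M" and xl: "left_div M x l" for x
  proof -
    obtain r where r: "r \<in> carrier M" "l = x \<otimes>\<^bsub>M\<^esub> r" using xl by (auto simp: left_div_def)
    then have "j = (c \<otimes>\<^bsub>G\<^esub> phi x) \<otimes>\<^bsub>G\<^esub> phi r" using j_def c xm phi_mult phi_carrier by (simp add: G.m_assoc)
    then show ?thesis using r unfolding le_def by blast
  qed
  have "\<forall>v\<in>carrier G. le g v \<longrightarrow> le h v \<longrightarrow> le j v"
  proof (intro ballI impI)
    fix v assume v: "v \<in> carrier G" and gv: "le g v" and hv: "le h v"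
    obtain r1 where r1: "r1 \<in> carrier M" "v = g \<otimes>\<^bsub>G\<^esub> phi r1" using gv by (auto simp: le_def)
    obtain r2 where r2: "r2 \<in> carrier M" "v = h \<otimes>\<^bsub>G\<^esub> phi r2" using hv by (auto simp: le_def)
    have e1: "v = c \<otimes>\<^bsub>G\<^esub> phi (p \<otimes>\<^bsub>M\<^esub> r1)" using r1 p c phi_mult phi_carrier by (simp add: G.m_assoc)
    have e2: "v = c \<otimes>\<^bsub>G\<^esub> phi (q \<otimes>\<^bsub>M\<^esub> r2)" using r2 q c phi_mult phi_carrier by (simp add: G.m_assoc)
    have "phi (p \<otimes>\<^bsub>M\<^esub> r1) = phi (q \<otimes>\<^bsub>M\<^esub> r2)"
      by (rule Glc[OF c phi_carrier[OF M.m_closed[OF p(1) r1(1)]] phi_carrier[OF M.m_closed[OF q(1) r2(1)]]]) (use e1 e2 in simp)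
    then have w: "p \<otimes>\<^bsub>M\<^esub> r1 = q \<otimes>\<^bsub>M\<^esub> r2" by (rule inj_onD[OF phi_inj]) (use p q r1 r2 in auto)
    have "left_div M p (p \<otimes>\<^bsub>M\<^esub> r1)" using r1(1) unfolding left_div_def by blast
    moreover have "left_div M q (p \<otimes>\<^bsub>M\<^esub> r1)" using r2(1) w unfolding left_div_def by blast
    ultimately have "left_div M l (p \<otimes>\<^bsub>M\<^esub> r1)" using l(4) p r1 by blast
    then obtain r3 where r3: "r3 \<in> carrier M" "p \<otimes>\<^bsub>M\<^esub> r1 = l \<otimes>\<^bsub>M\<^esub> r3" by (auto simp: left_div_def)
    have "v = j \<otimes>\<^bsub>G\<^esub> phi r3" using e1 r3 j_def c l phi_mult phi_carrier by (simp add: G.m_assoc)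
    then show "le j v" using r3 unfolding le_def by blast
  qed
  then show ?thesis using jc lej[OF p(1) l(2)] lej[OF q(1) l(3)] p(2) q(2) by blast
qed

definition "islubG A u \<longleftrightarrow> u \<in> carrier G \<and> (\<forall>s\<in>A. le s u) \<and> (\<forall>v\<in>carrier G. (\<forall>s\<in>A. le s v) \<longrightarrow> le u v)"

lemma lub_ex: "finite A \<Longrightarrow> A \<noteq> {} \<Longrightarrow> A \<subseteq> carrier G \<Longrightarrow> \<exists>u. islubG A u"
proof (induction A rule: finite_ne_induct)
  case (singleton x) then show ?case unfolding islubG_def using le_refl by auto
next
  case (insert x F)
  then obtain u where u: "islubG F u" by auto
  have x: "x \<in> carrier G" using insert by auto
  have uc: "u \<in> carrier G" using u by (simp add: islubG_def)
  obtain j where j: "j \<in> carrier G" "le x j" "le u j" "\<forall>v\<in>carrier G. le x v \<longrightarrow> le u v \<longrightarrow> le j v"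
    using join[OF x uc] by blast
  have "islubG (insert x F) j" unfolding islubG_def
  proof (intro conjI ballI impI)
    show "j \<in> carrier G" by fact
  next
    fix s assume "s \<in> insert x F"
    then show "le s j"
    proof
      assume "s = x" then show ?thesis using j by simp
    next
      assume s: "s \<in> F"
      then have "le s u" using u by (simp add: islubG_def)
      then show ?thesis using le_trans j(3) s insert.prems by blast
    qed
  next
    fix v assume v: "v \<in> carrier G" and b: "\<forall>s\<in>insert x F. le s v"
    then have "le u v" using u by (simp add: islubG_def)
    then show "le j v" using j(4) v b by simp
  qed
  then show ?case by blast
qed

lemma torsion_free: assumes x: "x \<in> carrier G" and n: "0 < n" and e: "x [^]\<^bsub>G\<^esub> (n::nat) = \<one>\<^bsub>G\<^esub>"
  shows "x = \<one>\<^bsub>G\<^esub>"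
proof -
  define A where "A = (\<lambda>i. x [^]\<^bsub>G\<^esub> i) ` {..<n}"
  have Ac: "A \<subseteq> carrier G" using x A_def by auto
  have Ane: "A \<noteq> {}" using n A_def by auto
  have Af: "finite A" using A_def by simp
  have cl: "x \<otimes>\<^bsub>G\<^esub> t \<in> A" if tA: "t \<in> A" for t
  proof -
    obtain i where i: "i < n" "t = x [^]\<^bsub>G\<^esub> i" using tA A_def by auto
    have xt: "x \<otimes>\<^bsub>G\<^esub> t = x [^]\<^bsub>G\<^esub> Suc i" using i(2) G.nat_pow_Suc2[OF x, of i] by simp
    show ?thesis
    proof (cases "Suc i < n")
      case True
      have "x [^]\<^bsub>G\<^esub> Suc i \<in> A" unfolding A_def by (rule imageI) (use True in simp)
      then show ?thesis using xt by simp
    next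
      case False then have "Suc i = n" using i by simp
      then have "x \<otimes>\<^bsub>G\<^esub> t = x [^]\<^bsub>G\<^esub> (0::nat)" using xt e by simp
      moreover have "x [^]\<^bsub>G\<^esub> (0::nat) \<in> A" unfolding A_def by (rule imageI) (use n in simp)
      ultimately show ?thesis by simp
    qed
  qed
  have pre: "\<exists>t\<in>A. s = x \<otimes>\<^bsub>G\<^esub> t" if sA: "s \<in> A" for s
  proof -
    obtain i where i: "i < n" "s = x [^]\<^bsub>G\<^esub> i" using sA A_def by auto
    show ?thesis
    proof (cases i)
      case 0
      have nn: "Suc (n - 1) = n" using n by simp
      have "s = x [^]\<^bsub>G\<^esub> n" using i 0 e by simp
      also have "\<dots> = x \<otimes>\<^bsub>G\<^esub> x [^]\<^bsub>G\<^esub> (n - 1)" using G.nat_pow_Suc2[OF x, of "n - 1"] unfolding nn .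
      finally have se: "s = x \<otimes>\<^bsub>G\<^esub> x [^]\<^bsub>G\<^esub> (n - 1)" .
      have "x [^]\<^bsub>G\<^esub> (n - 1) \<in> A" unfolding A_def by (rule imageI) (use n in simp)
      then show ?thesis using se by blast
    next
      case (Suc i')
      have se: "s = x \<otimes>\<^bsub>G\<^esub> x [^]\<^bsub>G\<^esub> i'" using i(2) G.nat_pow_Suc2[OF x, of i'] Suc by simp
      have "x [^]\<^bsub>G\<^esub> i' \<in> A" unfolding A_def by (rule imageI) (use i Suc in simp)
      then show ?thesis using se by blast
    qed
  qed
  obtain u where u: "islubG A u" using lub_ex[OF Af Ane Ac] by blast
  have uc: "u \<in> carrier G" using u by (simp add: islubG_def)
  have "\<forall>s\<in>A. le s (x \<otimes>\<^bsub>G\<^esub> u)"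
  proof
    fix s assume "s \<in> A"
    then obtain t where t: "t \<in> A" "s = x \<otimes>\<^bsub>G\<^esub> t" using pre by blast
    have "le t u" using t(1) u by (simp add: islubG_def)
    then show "le s (x \<otimes>\<^bsub>G\<^esub> u)" unfolding t(2) using le_mult[OF x] t(1) Ac by blast
  qed
  then have l1: "le u (x \<otimes>\<^bsub>G\<^esub> u)" using u x uc by (simp add: islubG_def)
  have "\<forall>s\<in>A. le s (inv\<^bsub>G\<^esub> x \<otimes>\<^bsub>G\<^esub> u)"
  proof
    fix s assume s: "s \<in> A"
    have sc: "s \<in> carrier G" using s Ac by auto
    have "le (x \<otimes>\<^bsub>G\<^esub> s) u" using cl[OF s] u by (simp add: islubG_def)
    then have "le (x \<otimes>\<^bsub>G\<^esub> s) (x \<otimes>\<^bsub>G\<^esub> (inv\<^bsub>G\<^esub> x \<otimes>\<^bsub>G\<^esub> u))" using x uc by (simp add: G.m_assoc[symmetric])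
    then show "le s (inv\<^bsub>G\<^esub> x \<otimes>\<^bsub>G\<^esub> u)" by (rule le_mult_rev[OF x sc G.m_closed[OF G.inv_closed[OF x] uc]])
  qed
  then have "le u (inv\<^bsub>G\<^esub> x \<otimes>\<^bsub>G\<^esub> u)" using u x uc by (simp add: islubG_def)
  then have "le (x \<otimes>\<^bsub>G\<^esub> u) (x \<otimes>\<^bsub>G\<^esub> (inv\<^bsub>G\<^esub> x \<otimes>\<^bsub>G\<^esub> u))" by (rule le_mult[OF x uc])
  then have l2: "le (x \<otimes>\<^bsub>G\<^esub> u) u" using x uc by (simp add: G.m_assoc[symmetric])
  have "u = x \<otimes>\<^bsub>G\<^esub> u" using le_antisym[OF uc l1 l2] .
  then have "x \<otimes>\<^bsub>G\<^esub> u = u" by (rule sym)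
  then show ?thesis using G.r_cancel_one[OF uc x] by blast
qed

end


lemma (in group) ipow_neg: "i < 0 \<Longrightarrow> x [^] (i::int) = inv (x [^] nat (- i))"
  unfolding int_pow_def2 by (simp only: if_True)

lemma (in group) ipow_nonneg: "\<not> i < 0 \<Longrightarrow> x [^] (i::int) = x [^] nat i"
  unfolding int_pow_def2 by (simp only: if_False)

lemma (in group) central_int_pow:
  assumes z: "z \<in> carrier G" and c: "\<forall>g\<in>carrier G. g \<otimes> z = z \<otimes> g" and g: "g \<in> carrier G"
  shows "g \<otimes> z [^] (i::int) = z [^] i \<otimes> g"
proof -
  have gz: "g \<otimes> z = z \<otimes> g" using c g by blast
  have zg: "z \<otimes> g = g \<otimes> z" using gz by (rule sym)
  have n: "z [^] (n::nat) \<otimes> g = g \<otimes> z [^] n" for n by (rule group_commutes_pow[OF zg z g])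
  have ninv: "g \<otimes> inv (z [^] (n::nat)) = inv (z [^] n) \<otimes> g" for n
  proof -
    have zn: "z [^] n \<in> carrier G" using z by simp
    have "g \<otimes> inv (z [^] n) = inv (z [^] n) \<otimes> (z [^] n \<otimes> g) \<otimes> inv (z [^] n)"
      using zn g by (simp add: m_assoc[symmetric])
    also have "\<dots> = inv (z [^] n) \<otimes> (g \<otimes> z [^] n) \<otimes> inv (z [^] n)" by (simp only: n)
    also have "\<dots> = inv (z [^] n) \<otimes> g" using zn g by (simp add: m_assoc)
    finally show ?thesis .
  qed
  show ?thesis
  proof (cases "i < 0")
    case True
    have e: "z [^] i = inv (z [^] nat (- i))" unfolding int_pow_def2 using True by (simp only: if_True)
    show ?thesis unfolding e by (rule ninv)
  next
    case False
    have e: "z [^] i = z [^] nat i" unfolding int_pow_def2 using False by (simp only: if_False)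
    show ?thesis unfolding e by (rule n[symmetric])
  qed
qed

lemma (in group) finite_sub_pow:
  assumes N: "H \<lhd> G" and K: "subgroup K (G Mod H)" "finite K"
    and g: "g \<in> carrier G" "H #> g \<in> K"
  shows "g [^] card K \<in> H"
proof -
  interpret N: normal H G by fact
  interpret Q: group "G Mod H" by (rule N.factorgroup_is_group)
  interpret KQ: group "(G Mod H)\<lparr>carrier := K\<rparr>" by (rule Q.subgroup_imp_group[OF K(1)])
  have hom: "(\<lambda>a. H #> a) \<in> hom G (G Mod H)" by (rule N.r_coset_hom_Mod)
  have "(H #> g) [^]\<^bsub>(G Mod H)\<lparr>carrier := K\<rparr>\<^esub> order ((G Mod H)\<lparr>carrier := K\<rparr>) = \<one>\<^bsub>(G Mod H)\<lparr>carrier := K\<rparr>\<^esub>"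
    using KQ.pow_order_eq_1[of "H #> g"] g by simp
  then have "(H #> g) [^]\<^bsub>G Mod H\<^esub> card K = H"
    by (simp add: order_def Q.nat_pow_consistent[symmetric])
  moreover have "(H #> g) [^]\<^bsub>G Mod H\<^esub> card K = H #> (g [^] card K)"
    using hom_nat_pow[OF hom g(1)] by simp
  ultimately have "H #> (g [^] card K) = H" by simp
  then show ?thesis using rcos_self[of "g [^] card K" H] g N.subgroup_axioms by auto
qed

locale cycC = group G for G (structure) +
  fixes z :: 'a and K :: "'a set set"
  assumes z: "z \<in> carrier G"
    and zc: "\<forall>g\<in>carrier G. g \<otimes> z = z \<otimes> g"
    and tf: "\<And>x n. x \<in> carrier G \<Longrightarrow> 0 < n \<Longrightarrow> x [^] (n::nat) = \<one> \<Longrightarrow> x = \<one>"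
    and sub: "subgroup K (G Mod generate G {z})" and fin: "finite K"
begin

abbreviation "H \<equiv> generate G {z}"
abbreviation "Q \<equiv> G Mod generate G {z}"

lemma normH: "H \<lhd> G"
  by (rule normal_generateI) (use z zc in \<open>auto simp: m_assoc\<close>)

sublocale N: normal H G by (rule normH)
sublocale Q: group Q by (rule N.factorgroup_is_group)

lemma H_eq: "H = {z [^] (k::int) | k. True}" using generate_pow[OF z] by simp

lemma hom: "(\<lambda>a. H #> a) \<in> hom G Q" by (rule N.r_coset_hom_Mod)

lemma pi_mult: "x \<in> carrier G \<Longrightarrow> y \<in> carrier G \<Longrightarrow> H #> (x \<otimes> y) = (H #> x) \<otimes>\<^bsub>Q\<^esub> (H #> y)"
  using hom by (simp add: hom_mult)

lemma pi_carrier: "x \<in> carrier G \<Longrightarrow> H #> x \<in> carrier Q"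
  using hom by (simp add: hom_in_carrier)

lemma card_pos: "0 < card K"
  using fin sub by (metis card_gt_0_iff empty_iff subgroup.one_closed)

lemma pow_in_H: "x \<in> carrier G \<Longrightarrow> H #> x \<in> K \<Longrightarrow> x [^] card K \<in> H"
  by (rule finite_sub_pow[OF normH sub fin])

lemma case_triv: assumes "z = \<one>" shows "cyclic_subgroup Q K"
proof -
  have H1: "H = {\<one>}" using assms generate_one by simp
  have "K = {\<one>\<^bsub>Q\<^esub>}"
  proof
    show "K \<subseteq> {\<one>\<^bsub>Q\<^esub>}"
    proof
      fix C assume C: "C \<in> K"
      then have "C \<in> carrier Q" using sub subgroup.subset by blast
      then obtain g where g: "g \<in> carrier G" "C = H #> g" by (auto simp: FactGroup_def RCOSETS_def)
      then have "g [^] card K \<in> H" using pow_in_H C by simp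
      then have "g = \<one>" using tf[OF g(1) card_pos] H1 by simp
      then show "C \<in> {\<one>\<^bsub>Q\<^esub>}" using g H1 by (simp add: r_coset_def)
    qed
  next
    show "{\<one>\<^bsub>Q\<^esub>} \<subseteq> K" using sub subgroup.one_closed by blast
  qed
  then show ?thesis unfolding cyclic_subgroup_def using Q.generate_one by auto
qed

end


locale cycC2 = cycC + assumes zn: "z \<noteq> \<one>"
begin

lemma zpow_inj: assumes "z [^] (i::int) = z [^] j" shows "i = j"
proof (rule ccontr)
  assume ne: "i \<noteq> j"
  have e: "z [^] (i - j) = \<one>" using assms z by (simp add: int_pow_diff)
  have e2: "z [^] (j - i) = \<one>" using assms z by (simp add: int_pow_diff)
  show False
  proof (cases "i - j > 0")
    case True
    then have "z [^] (nat (i - j)) = \<one>" using e by (metis int_pow_int nat_0_le order_less_imp_le)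
    then show False using tf[OF z, of "nat (i-j)"] True zn by simp
  next
    case False
    then have "j - i > 0" using ne by simp
    then have "z [^] (nat (j - i)) = \<one>" using e2 by (metis int_pow_int nat_0_le order_less_imp_le)
    then show False using tf[OF z, of "nat (j-i)"] \<open>j - i > 0\<close> zn by simp
  qed
qed

definition rep :: "'a set \<Rightarrow> 'a" where "rep C = (SOME g. g \<in> carrier G \<and> H #> g = C)"

lemma rep_spec: assumes "C \<in> carrier Q" shows "rep C \<in> carrier G" "H #> rep C = C"
proof -
  obtain g where "g \<in> carrier G" "C = H #> g" using assms by (auto simp: FactGroup_def RCOSETS_def)
  then have "\<exists>g. g \<in> carrier G \<and> H #> g = C" by blast
  then have "rep C \<in> carrier G \<and> H #> rep C = C" unfolding rep_def by (rule someI_ex)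
  then show "rep C \<in> carrier G" "H #> rep C = C" by auto
qed

lemma zpow_in_H: "z [^] (a::int) \<in> H" using H_eq by blast

lemma decomp: assumes x: "x \<in> carrier G" shows "\<exists>k. x = z [^] (k::int) \<otimes> rep (H #> x)"
proof -
  let ?r = "rep (H #> x)"
  have r: "?r \<in> carrier G" "H #> ?r = H #> x" using rep_spec pi_carrier[OF x] by auto
  have "x \<in> H #> ?r" using repr_independenceD[OF N.subgroup_axioms x] r by simp
  then have "x \<otimes> inv ?r \<in> H" using N.rcos_module_imp[OF is_group r(1)] by simp
  then obtain k where k: "x \<otimes> inv ?r = z [^] (k::int)" using H_eq by blast
  then have "x = z [^] k \<otimes> ?r" using x r(1) z by (metis inv_solve_right int_pow_closed)
  then show ?thesis by blast
qed

definition kk :: "'a \<Rightarrow> int" where "kk x = (THE k. x = z [^] k \<otimes> rep (H #> x))"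

lemma kk_eq: assumes x: "x \<in> carrier G" and e: "x = z [^] k \<otimes> rep (H #> x)" shows "kk x = k"
  unfolding kk_def
proof (rule the_equality)
  fix k' :: int assume e': "x = z [^] k' \<otimes> rep (H #> x)"
  have r: "rep (H #> x) \<in> carrier G" using rep_spec pi_carrier[OF x] by auto
  have "z [^] k' = z [^] k" using e e' r z by (metis int_pow_closed right_cancel)
  then show "k' = k" by (rule zpow_inj)
qed (rule e)

lemma kk_spec: assumes x: "x \<in> carrier G" shows "x = z [^] kk x \<otimes> rep (H #> x)"
  using decomp[OF x] kk_eq[OF x] by metis

lemma pi_zpow: assumes y: "y \<in> carrier G" shows "H #> (z [^] (a::int) \<otimes> y) = H #> y"
proof -
  have "H #> (z [^] a \<otimes> y) = (H #> z [^] a) \<otimes>\<^bsub>Q\<^esub> (H #> y)" using pi_mult y z by simp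
  also have "H #> z [^] a = H" using coset_join2[OF _ N.subgroup_axioms zpow_in_H] z by simp
  also have "H \<otimes>\<^bsub>Q\<^esub> (H #> y) = H #> y" using Q.l_one pi_carrier[OF y] by simp
  finally show ?thesis .
qed

lemma kk_zmult: assumes y: "y \<in> carrier G" shows "kk (z [^] (a::int) \<otimes> y) = a + kk y"
proof (rule kk_eq)
  show "z [^] a \<otimes> y \<in> carrier G" using y z by simp
  have r: "rep (H #> y) \<in> carrier G" using rep_spec pi_carrier[OF y] by auto
  have "z [^] a \<otimes> y = z [^] a \<otimes> (z [^] kk y \<otimes> rep (H #> y))" using kk_spec[OF y] by simp
  also have "\<dots> = z [^] (a + kk y) \<otimes> rep (H #> y)" using z r by (simp add: int_pow_mult m_assoc)
  finally have e1: "z [^] a \<otimes> y = z [^] (a + kk y) \<otimes> rep (H #> y)" .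
  have e2: "H #> (z [^] a \<otimes> y) = H #> y" by (rule pi_zpow[OF y])
  show "z [^] a \<otimes> y = z [^] (a + kk y) \<otimes> rep (H #> (z [^] a \<otimes> y))" unfolding e2 by (rule e1)
qed

lemma kk_mult: assumes x: "x \<in> carrier G" and y: "y \<in> carrier G"
  shows "kk (x \<otimes> y) = kk x + kk (rep (H #> x) \<otimes> y)"
proof -
  have r: "rep (H #> x) \<in> carrier G" using rep_spec pi_carrier[OF x] by auto
  have "x \<otimes> y = z [^] kk x \<otimes> (rep (H #> x) \<otimes> y)" using kk_spec[OF x] z r y
    by (metis int_pow_closed m_assoc)
  then show ?thesis using kk_zmult r y by simp
qed

lemma kk_rep: assumes "C \<in> carrier Q" shows "kk (rep C) = 0"
  using rep_spec[OF assms] by (intro kk_eq) (auto)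

definition "Hh = {g \<in> carrier G. H #> g \<in> K}"

lemma Hh_carrier: "g \<in> Hh \<Longrightarrow> g \<in> carrier G" by (simp add: Hh_def)

lemma Hh_mult: assumes "g \<in> Hh" "h \<in> Hh" shows "g \<otimes> h \<in> Hh"
proof -
  have "(H #> g) \<otimes>\<^bsub>Q\<^esub> (H #> h) \<in> K" using assms by (intro subgroup.m_closed[OF sub]) (auto simp: Hh_def)
  then show ?thesis using assms pi_mult by (auto simp: Hh_def)
qed

lemma Hh_one: "\<one> \<in> Hh"
  using sub subgroup.one_closed coset_join2[OF one_closed N.subgroup_axioms] N.one_closed
  by (fastforce simp: Hh_def)

lemma Hh_inv: assumes g: "g \<in> Hh" shows "inv g \<in> Hh"
proof -
  have "H #> inv g = inv\<^bsub>Q\<^esub> (H #> g)"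
    using hom g by (simp add: Hh_def group_hom.hom_inv group_hom_def group_hom_axioms_def Q.is_group is_group)
  then show ?thesis using g sub by (simp add: Hh_def subgroup.m_inv_closed)
qed

lemma Hh_natpow: "g \<in> Hh \<Longrightarrow> g [^] (n::nat) \<in> Hh"
  by (induction n) (auto simp: Hh_one Hh_mult)

lemma Hh_intpow: assumes g: "g \<in> Hh" shows "g [^] (i::int) \<in> Hh"
proof (cases "i < 0")
  case True show ?thesis unfolding ipow_neg[OF True] using g by (intro Hh_inv Hh_natpow)
next
  case False show ?thesis unfolding ipow_nonneg[OF False] by (rule Hh_natpow[OF g])
qed

lemma z_Hh: "z \<in> Hh"
  using sub subgroup.one_closed coset_join2[OF z N.subgroup_axioms] generate.incl[of z "{z}" G]
  by (fastforce simp: Hh_def z)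

definition E :: "'a \<Rightarrow> int" where "E g = (\<Sum>C\<in>K. kk (rep C \<otimes> g))"

lemma K_carrier: "C \<in> K \<Longrightarrow> C \<in> carrier Q" using sub subgroup.subset by blast

lemma bij_mult: assumes a: "a \<in> K" shows "bij_betw (\<lambda>C. C \<otimes>\<^bsub>Q\<^esub> a) K K"
  unfolding bij_betw_def
proof
  show "inj_on (\<lambda>C. C \<otimes>\<^bsub>Q\<^esub> a) K"
  proof (rule inj_onI)
    fix C D assume C: "C \<in> K" and D: "D \<in> K" and e: "C \<otimes>\<^bsub>Q\<^esub> a = D \<otimes>\<^bsub>Q\<^esub> a"
    have c: "C \<in> carrier Q" "D \<in> carrier Q" "a \<in> carrier Q" using C D a K_carrier by auto
    show "C = D" using Q.right_cancel[OF c(3) c(1) c(2)] e by blast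
  qed
  show "(\<lambda>C. C \<otimes>\<^bsub>Q\<^esub> a) ` K = K"
  proof
    show "(\<lambda>C. C \<otimes>\<^bsub>Q\<^esub> a) ` K \<subseteq> K"
    proof (rule image_subsetI)
      fix C assume "C \<in> K" then show "C \<otimes>\<^bsub>Q\<^esub> a \<in> K" by (rule subgroup.m_closed[OF sub _ a])
    qed
    show "K \<subseteq> (\<lambda>C. C \<otimes>\<^bsub>Q\<^esub> a) ` K"
    proof
      fix D assume D: "D \<in> K"
      have "D \<otimes>\<^bsub>Q\<^esub> inv\<^bsub>Q\<^esub> a \<in> K" by (intro subgroup.m_closed[OF sub] subgroup.m_inv_closed[OF sub] D a)
      moreover have "D = (D \<otimes>\<^bsub>Q\<^esub> inv\<^bsub>Q\<^esub> a) \<otimes>\<^bsub>Q\<^esub> a"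
      proof -
        have c: "D \<in> carrier Q" "a \<in> carrier Q" using D a K_carrier by auto
        show ?thesis by (simp only: Q.m_assoc[OF c(1) Q.inv_closed[OF c(2)] c(2)] Q.l_inv[OF c(2)] Q.r_one[OF c(1)])
      qed
      ultimately show "D \<in> (\<lambda>C. C \<otimes>\<^bsub>Q\<^esub> a) ` K" by blast
    qed
  qed
qed

lemma E_mult: assumes g: "g \<in> Hh" and h: "h \<in> carrier G" shows "E (g \<otimes> h) = E g + E h"
proof -
  have gc: "g \<in> carrier G" using g Hh_carrier by blast
  have "\<And>C. C \<in> K \<Longrightarrow> kk (rep C \<otimes> (g \<otimes> h)) = kk (rep C \<otimes> g) + kk (rep (C \<otimes>\<^bsub>Q\<^esub> (H #> g)) \<otimes> h)"
  proof -
    fix C assume C: "C \<in> K"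
    have r: "rep C \<in> carrier G" "H #> rep C = C" using rep_spec K_carrier C by auto
    have "kk (rep C \<otimes> (g \<otimes> h)) = kk ((rep C \<otimes> g) \<otimes> h)" by (simp only: m_assoc[OF r(1) gc h])
    also have "\<dots> = kk (rep C \<otimes> g) + kk (rep (H #> (rep C \<otimes> g)) \<otimes> h)" by (rule kk_mult[OF m_closed[OF r(1) gc] h])
    also have "H #> (rep C \<otimes> g) = C \<otimes>\<^bsub>Q\<^esub> (H #> g)" using pi_mult r gc by simp
    finally show "kk (rep C \<otimes> (g \<otimes> h)) = kk (rep C \<otimes> g) + kk (rep (C \<otimes>\<^bsub>Q\<^esub> (H #> g)) \<otimes> h)" .
  qed
  then have "E (g \<otimes> h) = E g + (\<Sum>C\<in>K. kk (rep (C \<otimes>\<^bsub>Q\<^esub> (H #> g)) \<otimes> h))"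
    unfolding E_def by (simp add: sum.distrib)
  also have "(\<Sum>C\<in>K. kk (rep (C \<otimes>\<^bsub>Q\<^esub> (H #> g)) \<otimes> h)) = E h"
    unfolding E_def using sum.reindex_bij_betw[OF bij_mult, of "H #> g" "\<lambda>D. kk (rep D \<otimes> h)"] g
    by (simp add: Hh_def)
  finally show ?thesis .
qed

lemma E_zpow: "E (z [^] (a::int)) = int (card K) * a"
proof -
  have "\<And>C. C \<in> K \<Longrightarrow> kk (rep C \<otimes> z [^] a) = a"
  proof -
    fix C assume C: "C \<in> K"
    have r: "rep C \<in> carrier G" using rep_spec K_carrier C by auto
    have "rep C \<otimes> z [^] a = z [^] a \<otimes> rep C" using central_int_pow[OF z zc r] .
    then show "kk (rep C \<otimes> z [^] a) = a" using kk_zmult[OF r] kk_rep[OF K_carrier[OF C]] by simp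
  qed
  then show ?thesis unfolding E_def by simp
qed

lemma E_one: "E \<one> = 0" using E_zpow[of 0] by simp

lemma E_pow: assumes g: "g \<in> Hh" shows "E (g [^] (n::nat)) = int n * E g"
proof (induction n)
  case 0 then show ?case using E_one by simp
next
  case (Suc n)
  have "g [^] Suc n = g [^] n \<otimes> g" by simp
  then have "E (g [^] Suc n) = E (g [^] n) + E g"
    using E_mult[OF Hh_natpow[OF g] Hh_carrier[OF g]] by simp
  then show ?case using Suc by (simp add: algebra_simps)
qed

lemma E_char: assumes g: "g \<in> Hh" shows "g [^] card K = z [^] E g"
proof -
  have gc: "g \<in> carrier G" using g Hh_carrier by blast
  have "g [^] card K \<in> H" using pow_in_H gc g by (simp add: Hh_def)
  then obtain a where a: "g [^] card K = z [^] (a::int)" using H_eq by blast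
  have h1: "E (g [^] card K) = int (card K) * E g" by (rule E_pow[OF g])
  have h2: "E (g [^] card K) = int (card K) * a" using a E_zpow by simp
  have "E g = a" using h1 h2 card_pos[THEN gr_implies_not0] by auto
  then show ?thesis using a by simp
qed

lemma E_inv: assumes g: "g \<in> Hh" shows "E (inv g) = - E g"
proof -
  have gc: "g \<in> carrier G" using g Hh_carrier by blast
  have "E (g \<otimes> inv g) = E g + E (inv g)" by (rule E_mult[OF g]) (use gc in simp)
  then show ?thesis using gc E_one by simp
qed

lemma E_inj: assumes g: "g \<in> Hh" and h: "h \<in> Hh" and e: "E g = E h" shows "g = h"
proof -
  have gc: "g \<in> carrier G" and hc: "h \<in> carrier G" using g h Hh_carrier by auto
  have x: "g \<otimes> inv h \<in> Hh" using Hh_mult[OF g Hh_inv[OF h]] .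
  have "E (g \<otimes> inv h) = 0" using E_mult[OF g] hc E_inv[OF h] e by simp
  then have "(g \<otimes> inv h) [^] card K = \<one>" using E_char[OF x] by simp
  then have "g \<otimes> inv h = \<one>" using tf card_pos gc hc by simp
  then show ?thesis using gc hc by (metis inv_equality inv_inv inv_closed)
qed

lemma E_intpow: assumes g: "g \<in> Hh" shows "E (g [^] (i::int)) = i * E g"
proof (cases "i \<ge> 0")
  case True
  then have "g [^] i = g [^] (nat i)" by (metis int_pow_int nat_0_le)
  then show ?thesis using E_pow[OF g, of "nat i"] True by simp
next
  case False
  then have "g [^] i = inv (g [^] (nat (-i)))" using ipow_neg by simp
  then have "E (g [^] i) = E (inv (g [^] (nat (-i))))" by simp
  also have "\<dots> = - E (g [^] (nat (-i)))" by (rule E_inv[OF Hh_natpow[OF g]])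
  also have "\<dots> = - (int (nat (-i)) * E g)" using E_pow[OF g] by simp
  also have "\<dots> = i * E g" using False by simp
  finally show ?thesis .
qed

lemma main: "cyclic_subgroup Q K"
proof -
  define P where "P = (\<lambda>d::nat. 0 < d \<and> (\<exists>g\<in>Hh. E g = int d))"
  have Pn: "P (card K)" unfolding P_def using card_pos z_Hh E_zpow[of 1] z by (auto intro!: bexI[of _ z])
  define d where "d = (LEAST d. P d)"
  have Pd: "P d" unfolding d_def using Pn by (rule LeastI)
  then obtain g0 where g0: "g0 \<in> Hh" "E g0 = int d" and dpos: "0 < d" unfolding P_def by blast
  have g0c: "g0 \<in> carrier G" using g0 Hh_carrier by blast
  have gen: "\<And>x. x \<in> Hh \<Longrightarrow> \<exists>q::int. x = g0 [^] q"
  proof -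
    fix x assume x: "x \<in> Hh"
    define q where "q = E x div int d"
    define y where "y = x \<otimes> inv (g0 [^] q)"
    have y: "y \<in> Hh" unfolding y_def using x Hh_inv Hh_intpow g0 Hh_mult by blast
    have "E y = E x + E (inv (g0 [^] q))" unfolding y_def using E_mult[OF x] g0c by simp
    also have "\<dots> = E x - q * int d" using E_inv[OF Hh_intpow[OF g0(1)]] E_intpow[OF g0(1)] g0 by simp
    also have "\<dots> = E x mod int d" unfolding q_def by (simp add: minus_div_mult_eq_mod)
    finally have Ey: "E y = E x mod int d" .
    have r0: "E x mod int d = 0"
    proof (rule ccontr)
      assume ne: "E x mod int d \<noteq> 0"
      have ge: "E x mod int d \<ge> 0" using dpos by simp
      have lt: "E x mod int d < int d" using dpos by simp
      have "P (nat (E x mod int d))" unfolding P_def using ne ge y Ey by auto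
      then have "d \<le> nat (E x mod int d)" unfolding d_def by (rule Least_le)
      then have "int d \<le> E x mod int d" using ge by (simp add: le_nat_iff)
      then show False using lt by simp
    qed
    have "E x = E (g0 [^] q)" using E_intpow[OF g0(1)] g0 r0 unfolding q_def
      by (metis add.right_neutral mult.commute div_mult_mod_eq)
    then have "x = g0 [^] q" using E_inj[OF x Hh_intpow[OF g0(1)]] by simp
    then show "\<exists>q::int. x = g0 [^] q" by blast
  qed
  have g0K: "H #> g0 \<in> K" using g0 by (simp add: Hh_def)
  have "K = generate Q {H #> g0}"
  proof
    show "K \<subseteq> generate Q {H #> g0}"
    proof
      fix C assume C: "C \<in> K"
      have r: "rep C \<in> carrier G" "H #> rep C = C" using rep_spec K_carrier C by auto
      then have "rep C \<in> Hh" using C by (simp add: Hh_def)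
      then obtain q where q: "rep C = g0 [^] (q::int)" using gen by blast
      have "C = (H #> g0) [^]\<^bsub>Q\<^esub> q" using r q hom_int_pow[OF hom g0c] by simp
      then show "C \<in> generate Q {H #> g0}" using Q.generate_pow[OF pi_carrier[OF g0c]] by blast
    qed
    show "generate Q {H #> g0} \<subseteq> K" using Q.generate_subgroup_incl sub g0K by blast
  qed
  then show ?thesis unfolding cyclic_subgroup_def using g0K by blast
qed

end

lemma (in group) partC:
  assumes z: "z \<in> carrier G"
    and zc: "\<forall>g\<in>carrier G. g \<otimes> z = z \<otimes> g"
    and tf: "\<And>x n. x \<in> carrier G \<Longrightarrow> 0 < n \<Longrightarrow> x [^] (n::nat) = \<one> \<Longrightarrow> x = \<one>"
  shows "\<forall>K. subgroup K (G Mod generate G {z}) \<and> finite K \<longrightarrow> cyclic_subgroup (G Mod generate G {z}) K"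
proof (intro allI impI, elim conjE)
  fix K assume sub: "subgroup K (G Mod generate G {z})" and fin: "finite K"
  interpret cycC G z K by (intro cycC.intro cycC_axioms.intro is_group) (use z zc tf sub fin in auto)
  show "cyclic_subgroup (G Mod generate G {z}) K"
  proof (cases "z = \<one>")
    case True then show ?thesis by (rule case_triv)
  next
    case False
    interpret cycC2 G z K by (intro cycC2.intro cycC2_axioms.intro cycC_axioms False)
    show ?thesis by (rule main)
  qed
qed

theorem mainTheorem9:
  fixes M :: "('a, 'c) monoid_scheme" and G :: "('b, 'd) monoid_scheme"
    and \<phi> :: "'a \<Rightarrow> 'b" and \<Delta> :: 'a and m :: nat
  assumes "garside_monoid M \<Delta>"
    and "group_of_fractions M G \<phi>"
    and "m = (LEAST n::nat. n > 0 \<and> central_elem G (\<phi> \<Delta> [^]\<^bsub>G\<^esub> n))"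
  shows "\<forall>K. subgroup K (G Mod (generate G {\<phi> \<Delta> [^]\<^bsub>G\<^esub> m})) \<and> finite K
           \<longrightarrow> cyclic_subgroup (G Mod (generate G {\<phi> \<Delta> [^]\<^bsub>G\<^esub> m})) K"
proof -
  interpret gars M G \<phi> \<Delta> using assms(1,2) by unfold_locales
  have ex: "\<exists>n::nat. n > 0 \<and> central_elem G (\<phi> \<Delta> [^]\<^bsub>G\<^esub> n)" using central_pow_G by blast
  have "m > 0 \<and> central_elem G (\<phi> \<Delta> [^]\<^bsub>G\<^esub> m)" unfolding assms(3) by (rule LeastI_ex[OF ex])
  then have c: "central_elem G (\<phi> \<Delta> [^]\<^bsub>G\<^esub> m)" by blast
  show ?thesis
  proof (rule G.partC)
    show "\<phi> \<Delta> [^]\<^bsub>G\<^esub> m \<in> carrier G" using c unfolding central_elem_def by blast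
    show "\<forall>g\<in>carrier G. g \<otimes>\<^bsub>G\<^esub> \<phi> \<Delta> [^]\<^bsub>G\<^esub> m = \<phi> \<Delta> [^]\<^bsub>G\<^esub> m \<otimes>\<^bsub>G\<^esub> g"
      using c unfolding central_elem_def by blast
    show "\<And>x n. x \<in> carrier G \<Longrightarrow> 0 < n \<Longrightarrow> x [^]\<^bsub>G\<^esub> (n::nat) = \<one>\<^bsub>G\<^esub> \<Longrightarrow> x = \<one>\<^bsub>G\<^esub>"
      by (rule torsion_free)
  qed
qed

end
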